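(* Let $r\ge1$ and let $p_1,p_2,\ldots,p_r$ be primes, each $\ge5$ (not necessarily distinct). Then for every $n\ge0$, \[ b_2\!\left(\prod_{s=1}^{r}p_s^2\, n+\frac{(24i+p_{r})\prod_{s=1}^{r-1}p_s^2\,p_{r}-1}{24}\right)\equiv 0 \pmod 2 \] for each $i=1,2,\ldots,p_r-1$ (with the empty product equal to $1$).
   Context: For a positive integer $\ell$, $b_\ell(n)$ denotes the number of partitions of $n$ having no part divisible by $\ell$. *)

theory Defs
  imports Main "HOL-Library.Multiset" "HOL-Computational_Algebra.Primes"
begin

definition partitions :: "nat \<Rightarrow> nat multiset set" where
  "partitions n = {M. (\<forall>x \<in># M. 0 < x) \<and> sum_mset M = n}"

definition b :: "nat \<Rightarrow> nat \<Rightarrow> nat" where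
  "b l n = card {M \<in> partitions n. \<forall>x \<in># M. \<not> l dvd x}"

end

theory Submission
  imports Defs
begin



lemma sum_pow2_split:
  fixes J :: "nat set" assumes "finite J"
  shows "(\<Sum>j\<in>J. (2::nat)^j) = (if 0 \<in> J then 1 else 0) + 2 * (\<Sum>j\<in>Suc -` J. 2^j)"
proof -
  have J: "J = (J \<inter> {0}) \<union> Suc ` (Suc -` J)"
    by (auto simp: image_iff) (metis not0_implies_Suc)
  have fin: "finite (Suc -` J)" using assms by (simp add: finite_vimageI)
  have "(\<Sum>j\<in>J. (2::nat)^j) = (\<Sum>j\<in>J \<inter> {0}. 2^j) + (\<Sum>j\<in>Suc ` (Suc -` J). 2^j)"
    by (subst J, rule sum.union_disjoint) (use assms fin in auto)
  also have "(\<Sum>j\<in>Suc ` (Suc -` J). (2::nat)^j) = 2 * (\<Sum>j\<in>Suc -` J. 2^j)"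
    by (subst sum.reindex) (auto simp: sum_distrib_left)
  also have "(\<Sum>j\<in>J \<inter> {0}. (2::nat)^j) = (if 0 \<in> J then 1 else 0)"
    by auto
  finally show ?thesis .
qed

lemma bit_sum_pow2:
  fixes J :: "nat set" assumes "finite J"
  shows "bit (\<Sum>j\<in>J. (2::nat)^j) n \<longleftrightarrow> n \<in> J"
  using assms
proof (induction n arbitrary: J)
  case 0
  then show ?case by (subst sum_pow2_split) (auto simp: bit_0)
next
  case (Suc n)
  have fin: "finite (Suc -` J)" using Suc.prems by (simp add: finite_vimageI)
  have "bit (\<Sum>j\<in>J. (2::nat)^j) (Suc n) = bit ((\<Sum>j\<in>J. (2::nat)^j) div 2) n"
    by (simp add: bit_Suc)
  also have "(\<Sum>j\<in>J. (2::nat)^j) div 2 = (\<Sum>j\<in>Suc -` J. 2^j)"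
    by (subst sum_pow2_split[OF Suc.prems]) auto
  finally show ?case using Suc.IH[OF fin] by simp
qed

lemma bits_finite_sum:
  fixes c :: nat
  shows "finite {j. bit c j} \<and> c = (\<Sum>j\<in>{j. bit c j}. 2^j)"
proof (induction c rule: less_induct)
  case (less c)
  show ?case
  proof (cases "c = 0")
    case True then show ?thesis by simp
  next
    case False
    then have "c div 2 < c" by simp
    from less[OF this] have IH: "finite {j. bit (c div 2) j}"
      "c div 2 = (\<Sum>j\<in>{j. bit (c div 2) j}. 2^j)" by auto
    have eq: "Suc -` {j. bit c j} = {j. bit (c div 2) j}" by (auto simp: bit_Suc)
    have eq2: "{y. bit c (Suc y)} = {j. bit (c div 2) j}" by (simp add: bit_Suc)
    have sub: "{j. bit c j} \<subseteq> {0} \<union> Suc ` {j. bit (c div 2) j}"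
      by (auto simp: bit_Suc image_iff) (metis bit_Suc not0_implies_Suc)
    have fin: "finite {j. bit c j}" by (rule finite_subset[OF sub]) (use IH in auto)
    have "(\<Sum>j\<in>{j. bit c j}. (2::nat)^j) = (if odd c then 1 else 0) + 2 * (c div 2)"
      by (subst sum_pow2_split[OF fin]) (simp add: eq2 IH(2)[symmetric] bit_0)
    also have "\<dots> = c" by presburger
    finally show ?thesis using fin by simp
  qed
qed

lemma even_card_involution:
  assumes "\<And>x. x \<in> A \<Longrightarrow> f x \<in> A" "\<And>x. x \<in> A \<Longrightarrow> f (f x) = x"
    "\<And>x. x \<in> A \<Longrightarrow> f x \<noteq> x"
  shows "even (card A)"
  using assms
proof (induction "card A" arbitrary: A rule: less_induct)
  case less
  show ?case
  proof (cases "finite A \<and> A \<noteq> {}")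
    case False then show ?thesis by auto
  next
    case True
    then obtain x where x: "x \<in> A" by auto
    let ?A = "A - {x, f x}"
    have fx: "f x \<in> A" "f x \<noteq> x" using less.prems x by auto
    have c2: "card {x, f x} = 2" using fx by simp
    have sub: "{x, f x} \<subseteq> A" using x fx by auto
    have "card {x, f x} \<le> card A" using True sub card_mono by blast
    moreover have "card ?A = card A - card {x, f x}"
      using True sub by (simp add: card_Diff_subset finite_subset)
    ultimately have c: "card A = card ?A + 2" using c2 by simp
    have "even (card ?A)"
    proof (rule less.hyps)
      show "card ?A < card A" using c by simp
      fix y assume y: "y \<in> ?A"
      have fy: "f y \<in> A" "f (f y) = y" "f (f x) = x" using y x less.prems by auto
      show "f y \<in> ?A" using y fy by auto
      show "f (f y) = y" using y less.prems by auto
      show "f y \<noteq> y" using y less.prems by auto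
    qed
    then show ?thesis using c by simp
  qed
qed




definition v2 :: "nat \<Rightarrow> nat" where "v2 x = multiplicity (2::nat) x"
definition od :: "nat \<Rightarrow> nat" where "od x = x div 2 ^ v2 x"

lemma od_v2: "x = od x * 2 ^ v2 x"
  unfolding od_def v2_def using multiplicity_dvd[of "2::nat" x] by simp

lemma od_odd: "x \<noteq> 0 \<Longrightarrow> odd (od x)"
  unfolding od_def v2_def using multiplicity_decompose[of x "2::nat"] by simp

lemma v2_od_pow: assumes "odd k" shows "v2 (k * 2^j) = j" "od (k * 2^j) = k"
proof -
  have "multiplicity (2::nat) (2^j * k) = j"
    by (rule multiplicity_decomposeI) (use assms in auto)
  then show "v2 (k * 2^j) = j" by (simp add: v2_def mult.commute)
  then show "od (k * 2^j) = k" by (simp add: od_def)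
qed

lemma pow_decomp_unique:
  fixes k k' j j' :: nat
  assumes "odd k" "odd k'" "k * 2^j = k' * 2^j'" shows "k = k'" "j = j'"
  using v2_od_pow[OF assms(1), of j] v2_od_pow[OF assms(2), of j'] assms(3) by metis+

definition DS :: "nat \<Rightarrow> nat set set" where
  "DS n = {S. finite S \<and> 0 \<notin> S \<and> \<Sum>S = n}"

definition OD :: "nat \<Rightarrow> nat multiset set" where
  "OD n = {M \<in> partitions n. \<forall>x\<in>#M. \<not> 2 dvd x}"

definition psi :: "nat set \<Rightarrow> nat multiset" where
  "psi S = (\<Sum>x\<in>S. replicate_mset (2 ^ v2 x) (od x))"

definition phi :: "nat multiset \<Rightarrow> nat set" where
  "phi M = (\<lambda>(k,j). k * 2^j) ` {(k,j). k \<in># M \<and> bit (count M k) j}"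

lemma count_psi_gen: "count (psi S) k = (\<Sum>x\<in>S. if od x = k then 2 ^ v2 x else 0)"
  unfolding psi_def count_sum by (rule sum.cong) auto

lemma count_psi_even:
  assumes "0 \<notin> S" "even k" shows "count (psi S) k = 0"
  unfolding count_psi_gen using assms od_odd by (intro sum.neutral) (metis)

lemma count_psi_odd:
  assumes "finite S" "odd k" shows "count (psi S) k = (\<Sum>j\<in>{j. k * 2^j \<in> S}. 2^j)"
proof -
  have "count (psi S) k = (\<Sum>x\<in>{x\<in>S. od x = k}. 2 ^ v2 x)"
    unfolding count_psi_gen using assms by (simp add: sum.inter_filter)
  also have "{x\<in>S. od x = k} = (\<lambda>j. k * 2^j) ` {j. k * 2^j \<in> S}"
  proof (rule set_eqI, rule iffI)
    fix x assume x: "x \<in> {x\<in>S. od x = k}"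
    then have "x = k * 2 ^ v2 x" using od_v2[of x] by simp
    then show "x \<in> (\<lambda>j. k * 2^j) ` {j. k * 2^j \<in> S}" using x by (auto intro!: image_eqI[of _ _ "v2 x"])
  next
    fix x assume "x \<in> (\<lambda>j. k * 2^j) ` {j. k * 2^j \<in> S}"
    then show "x \<in> {x\<in>S. od x = k}" using v2_od_pow[OF assms(2)] by auto
  qed
  also have "(\<Sum>x\<in>(\<lambda>j. k * 2^j) ` {j. k * 2^j \<in> S}. 2 ^ v2 x) = (\<Sum>j\<in>{j. k * 2^j \<in> S}. 2^j)"
  proof (subst sum.reindex)
    show "inj_on (\<lambda>j. k * 2 ^ j) {j. k * 2 ^ j \<in> S}"
      using assms(2) by (auto intro!: inj_onI dest: pow_decomp_unique)
  qed (use v2_od_pow[OF assms(2)] in simp)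
  finally show ?thesis .
qed

lemma finite_pow_vimage:
  fixes S :: "nat set" and k :: nat
  assumes "finite S" "odd k" shows "finite {j. k * 2^j \<in> S}"
proof -
  have "inj (\<lambda>j::nat. k * 2^j)" using assms(2) by (auto intro!: injI dest: pow_decomp_unique)
  then have "finite ((\<lambda>j::nat. k * 2^j) -` S)" using assms(1) by (intro finite_vimageI)
  then show ?thesis by (simp add: vimage_def)
qed

lemma sum_psi: "finite S \<Longrightarrow> sum_mset (psi S) = \<Sum>S"
  unfolding psi_def
proof (induction S rule: finite_induct)
  case (insert x F)
  have "2 ^ v2 x * od x = x" using od_v2[of x] by (metis mult.commute)
  then show ?case using insert by (simp add: sum_mset.union)
qed simp

lemma psi_in: assumes "S \<in> DS n" shows "psi S \<in> OD n"
proof -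
  have S: "finite S" "0 \<notin> S" "\<Sum>S = n" using assms by (auto simp: DS_def)
  have mem: "x \<in># psi S \<Longrightarrow> odd x" for x
    by (metis count_psi_even[OF S(2)] count_eq_zero_iff)
  show ?thesis unfolding OD_def partitions_def
    using mem sum_psi[OF S(1)] S(3) by (auto intro!: odd_pos)
qed

lemma phi_psi: assumes "S \<in> DS n" shows "phi (psi S) = S"
proof -
  have S: "finite S" "0 \<notin> S" using assms by (auto simp: DS_def)
  have mem: "x \<in># psi S \<Longrightarrow> odd x" for x
    by (metis count_psi_even[OF S(2)] count_eq_zero_iff)
  have key: "k \<in># psi S \<and> bit (count (psi S) k) j \<longleftrightarrow> odd k \<and> k * 2^j \<in> S" for k j
  proof
    assume a: "k \<in># psi S \<and> bit (count (psi S) k) j"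
    then have "odd k" using mem by auto
    then show "odd k \<and> k * 2^j \<in> S" using a
      by (simp add: count_psi_odd[OF S(1)] bit_sum_pow2[OF finite_pow_vimage[OF S(1)]])
  next
    assume a: "odd k \<and> k * 2^j \<in> S"
    have fin: "finite {j. k * 2^j \<in> S}" using finite_pow_vimage[OF S(1)] a by auto
    have "(2::nat)^j \<le> (\<Sum>j\<in>{j. k * 2^j \<in> S}. 2^j)"
      using a fin by (intro member_le_sum) auto
    then have "0 < (\<Sum>j\<in>{j. k * 2^j \<in> S}. (2::nat)^j)"
      by (meson less_le_trans zero_less_numeral zero_less_power)
    then have "count (psi S) k > 0" using a by (simp add: count_psi_odd[OF S(1)])
    then have "k \<in># psi S" by (metis count_eq_zero_iff less_irrefl)
    then show "k \<in># psi S \<and> bit (count (psi S) k) j" using a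
      by (simp add: count_psi_odd[OF S(1)] bit_sum_pow2[OF fin])
  qed
  show ?thesis
  proof (rule set_eqI)
    fix x
    show "x \<in> phi (psi S) \<longleftrightarrow> x \<in> S"
    proof
      assume "x \<in> phi (psi S)"
      then show "x \<in> S" unfolding phi_def using key by auto
    next
      assume x: "x \<in> S"
      then have "x \<noteq> 0" using S(2) by (metis)
      then have "odd (od x) \<and> od x * 2 ^ v2 x \<in> S" using x od_odd od_v2[of x] by simp
      then have "od x \<in># psi S \<and> bit (count (psi S) (od x)) (v2 x)" using key by blast
      then show "x \<in> phi (psi S)" unfolding phi_def using od_v2[of x]
        by (auto intro!: image_eqI[of _ _ "(od x, v2 x)"])
    qed
  qed
qed

lemma phi_props: assumes "M \<in> OD n"
  shows "finite (phi M)" "0 \<notin> phi M" "psi (phi M) = M"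
proof -
  have M: "\<And>x. x \<in># M \<Longrightarrow> odd x" "sum_mset M = n" using assms
    by (auto simp: OD_def partitions_def)
  have "{(k,j). k \<in># M \<and> bit (count M k) j} \<subseteq> Sigma (set_mset M) (\<lambda>k. {j. bit (count M k) j})"
    by auto
  moreover have "finite (Sigma (set_mset M) (\<lambda>k. {j. bit (count M k) j}))"
    using bits_finite_sum by (intro finite_SigmaI) auto
  ultimately show fin: "finite (phi M)" unfolding phi_def by (meson finite_imageI finite_subset)
  show "0 \<notin> phi M"
  proof
    assume "0 \<in> phi M"
    then obtain k j where kj: "k \<in># M" "k * 2^j = (0::nat)" unfolding phi_def by auto
    then have "k = 0" by simp
    then show False using M(1)[OF kj(1)] by simp
  qed
  have memphi: "k * 2^j \<in> phi M \<longleftrightarrow> bit (count M k) j" if "odd k" for k j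
  proof
    assume "k * 2^j \<in> phi M"
    then obtain k' j' where kj: "k * 2^j = k' * 2^j'" "k' \<in># M" "bit (count M k') j'"
      unfolding phi_def by auto
    have "k = k'" "j = j'" using pow_decomp_unique[OF that M(1)[OF kj(2)] kj(1)] by auto
    then show "bit (count M k) j" using kj(3) by simp
  next
    assume b: "bit (count M k) j"
    have "k \<in># M"
    proof (rule ccontr)
      assume "k \<notin># M"
      then have "count M k = 0" by (simp add: not_in_iff)
      then show False using b by simp
    qed
    note b this
    then show "k * 2^j \<in> phi M" unfolding phi_def by (intro image_eqI[of _ _ "(k,j)"]) auto
  qed
  show "psi (phi M) = M"
  proof (rule multiset_eqI)
    fix k
    show "count (psi (phi M)) k = count M k"
    proof (cases "odd k")
      case True
      have e: "{j. k * 2^j \<in> phi M} = {j. bit (count M k) j}" using memphi[OF True] by blast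
      have "count (psi (phi M)) k = (\<Sum>j\<in>{j. bit (count M k) j}. 2^j)"
        unfolding count_psi_odd[OF fin True] e ..
      also have "\<dots> = count M k" using bits_finite_sum[of "count M k"] by simp
      finally show ?thesis .
    next
      case False
      have "k \<notin># M" using M(1) False by blast
      then show ?thesis using count_psi_even[OF \<open>0 \<notin> phi M\<close>] False
        by (simp add: not_in_iff)
    qed
  qed
qed

lemma phi_in: assumes "M \<in> OD n" shows "phi M \<in> DS n"
proof -
  have "sum_mset M = n" using assms by (auto simp: OD_def partitions_def)
  then show ?thesis using phi_props[OF assms] sum_psi[of "phi M"] by (simp add: DS_def)
qed

lemma b2_eq_DS: "b 2 n = card (DS n)"
proof -
  have "bij_betw psi (DS n) (OD n)"
    by (rule bij_betw_byWitness[where f'=phi]) (auto simp: phi_psi phi_props psi_in phi_in)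
  then have "card (DS n) = card (OD n)" by (rule bij_betw_same_card)
  then show ?thesis by (simp add: b_def OD_def)
qed




definition rn :: "nat set \<Rightarrow> nat" where "rn S = (LEAST t. Max S - t \<notin> S)"

definition fA :: "nat set \<Rightarrow> nat set" where
  "fA S = (S - {Min S} - {Suc (Max S) - Min S..Max S}) \<union> {Suc (Suc (Max S)) - Min S..Suc (Max S)}"

definition fB :: "nat set \<Rightarrow> nat set" where
  "fB S = (S - {Suc (Max S) - rn S..Max S}) \<union> {Max S - rn S..Max S - 1} \<union> {rn S}"

definition fr :: "nat set \<Rightarrow> nat set" where
  "fr S = (if Min S \<le> rn S then fA S else fB S)"

definition good :: "nat set \<Rightarrow> bool" where
  "good S \<longleftrightarrow> (Min S \<le> rn S \<and> 2 * Min S \<le> Max S) \<or> (rn S < Min S \<and> 2 * rn S < Max S)"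

locale pset =
  fixes S :: "nat set"
  assumes fin: "finite S" and ne: "S \<noteq> {}" and nz: "0 \<notin> S"
begin

lemma basics:
  "Max S \<in> S" "Min S \<in> S" "\<And>x. x \<in> S \<Longrightarrow> Min S \<le> x" "\<And>x. x \<in> S \<Longrightarrow> x \<le> Max S"
  "0 < Min S" "1 \<le> rn S" "rn S \<le> Max S" "Max S - rn S \<notin> S" "\<And>t. t < rn S \<Longrightarrow> Max S - t \<in> S"
proof -
  show m: "Max S \<in> S" "Min S \<in> S" using fin ne by auto
  show "\<And>x. x \<in> S \<Longrightarrow> Min S \<le> x" "\<And>x. x \<in> S \<Longrightarrow> x \<le> Max S" using fin by auto
  show "0 < Min S" using m nz by (metis gr0I)
  have ex: "Max S - Max S \<notin> S" using nz by simp
  show nin: "Max S - rn S \<notin> S" unfolding rn_def by (rule LeastI[where P="\<lambda>t. Max S - t \<notin> S", OF ex])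
  show "rn S \<le> Max S" unfolding rn_def by (rule Least_le[where P="\<lambda>t. Max S - t \<notin> S", OF ex])
  show "\<And>t. t < rn S \<Longrightarrow> Max S - t \<in> S" unfolding rn_def using not_less_Least by blast
  show "1 \<le> rn S" using nin m by (metis diff_zero less_one not_le)
qed

end

lemma sum_shift_Icc: "\<Sum>{Suc u..Suc w} = \<Sum>{u..w} + card {u..w}"
proof -
  have "\<Sum>{Suc u..Suc w} = (\<Sum>i\<in>{u..w}. Suc i)"
    by (rule sum.shift_bounds_cl_Suc_ivl)
  also have "\<dots> = \<Sum>{u..w} + card {u..w}" unfolding Suc_eq_plus1 sum.distrib by simp
  finally show ?thesis .
qed

lemma (in pset) A_props:
  assumes h: "Min S \<le> rn S" "2 * Min S \<le> Max S"
  defines "T \<equiv> fA S"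
  shows "pset T" "\<Sum>T = \<Sum>S" "Max T = Suc (Max S)" "rn T = Min S" "Min T > rn T"
    "2 * rn T < Max T" "fB T = S"
proof -
  note B = basics
  define M where "M = Max S"
  define s where "s = Min S"
  have hs: "s \<le> rn S" "2 * s \<le> M" "0 < s" using h B(5) by (auto simp: M_def s_def)
  have mem: "x \<in> T \<longleftrightarrow> (x \<in> S \<and> x \<noteq> s \<and> x < Suc M - s) \<or> (Suc (Suc M) - s \<le> x \<and> x \<le> Suc M)" for x
    unfolding T_def fA_def M_def[symmetric] s_def[symmetric] using B(4)[of x] by (auto simp: M_def)
  have I: "{Suc M - s..M} \<subseteq> S"
  proof
    fix x assume "x \<in> {Suc M - s..M}"
    then have "x = M - (M - x)" "M - x < rn S" using hs by auto
    then show "x \<in> S" using B(9)[of "M - x"] by (simp add: M_def)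
  qed
  have finT: "finite T" unfolding T_def fA_def using fin by auto
  have le: "x \<le> Suc M" if "x \<in> T" for x using that unfolding mem by linarith
  have "Suc (Suc M) - s \<le> Suc M" using hs by arith
  then have inT: "Suc M \<in> T" unfolding mem by blast
  have MT: "Max T = Suc M"
    by (rule Max_eqI[OF finT le inT])
  have gt: "x \<in> T \<Longrightarrow> s < x" for x
    using mem[of x] B(3)[of x] hs by (auto simp: s_def)
  show "pset T" proof
    show "finite T" by (rule finT)
    show "T \<noteq> {}" using mem[of "Suc M"] hs by auto
    show "0 \<notin> T" using gt by force
  qed
  then interpret T: pset T .
  show "Max T = Suc (Max S)" using MT by (simp add: M_def)
  show rnT: "rn T = Min S"
    unfolding rn_def s_def[symmetric]
  proof (rule Least_equality)
    show "Max T - s \<notin> T" using mem[of "Max T - s"] MT hs by auto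
    fix y assume "Max T - y \<notin> T"
    then show "s \<le> y" using mem[of "Max T - y"] MT hs by (cases "s \<le> y") auto
  qed
  show "Min T > rn T" using gt T.basics(2) rnT by (simp add: s_def)
  show "2 * rn T < Max T" using rnT MT hs by (simp add: s_def)
  show "fB T = S"
  proof -
    have "fB T = (T - {Suc (Suc M) - s..Suc M}) \<union> {Suc M - s..M} \<union> {s}"
      unfolding fB_def MT rnT s_def[symmetric] by simp
    also have "\<dots> = S"
    proof (rule set_eqI)
      fix x
      show "x \<in> (T - {Suc (Suc M) - s..Suc M}) \<union> {Suc M - s..M} \<union> {s} \<longleftrightarrow> x \<in> S"
        using mem[of x] I B(2) B(4)[of x] hs by (auto simp: s_def M_def)
    qed
    finally show ?thesis .
  qed
  define R where "R = S - {s} - {Suc M - s..M}"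
  have sI: "s \<notin> {Suc M - s..M}" using hs by auto
  have S_split: "S = R \<union> ({s} \<union> {Suc M - s..M})" using I B(2) by (auto simp: R_def s_def)
  have T_split: "T = R \<union> {Suc (Suc M) - s..Suc M}"
    unfolding T_def fA_def R_def M_def s_def by simp
  have sumS: "\<Sum>S = \<Sum>R + (s + \<Sum>{Suc M - s..M})"
    by (subst S_split, subst sum.union_disjoint) (use fin sI in \<open>auto simp: R_def\<close>)
  have sumT: "\<Sum>T = \<Sum>R + \<Sum>{Suc (Suc M) - s..Suc M}"
    by (subst T_split, subst sum.union_disjoint) (use fin B(4) in \<open>auto simp: R_def M_def\<close>)
  have "Suc (Suc M) - s = Suc (Suc M - s)" using hs by simp
  then have "\<Sum>{Suc (Suc M) - s..Suc M} = \<Sum>{Suc M - s..M} + s"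
    using sum_shift_Icc[of "Suc M - s" M] hs by simp
  then show "\<Sum>T = \<Sum>S" using sumS sumT by simp
qed

lemma (in pset) B_props:
  assumes h: "rn S < Min S" "2 * rn S < Max S"
  defines "T \<equiv> fB S"
  shows "pset T" "\<Sum>T = \<Sum>S" "Max T = Max S - 1" "Min T = rn S" "Min T \<le> rn T"
    "2 * Min T \<le> Max T" "fA T = S"
proof -
  note B = basics
  define M where "M = Max S"
  define r where "r = rn S"
  have hs: "r < Min S" "2 * r < M" "1 \<le> r" "M - r \<notin> S" "\<And>t. t < r \<Longrightarrow> M - t \<in> S"
    using h B(6,8,9) by (auto simp: M_def r_def)
  have mem: "x \<in> T \<longleftrightarrow> (x \<in> S \<and> x < Suc M - r) \<or> (M - r \<le> x \<and> x \<le> M - 1) \<or> x = r" for x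
    unfolding T_def fB_def M_def[symmetric] r_def[symmetric] using B(4)[of x] by (auto simp: M_def)
  have small: "x < M - r" if "x \<in> S" "x < Suc M - r" for x
  proof -
    have "x \<le> M - r" using that(2) hs(2) by arith
    moreover have "x \<noteq> M - r" using hs(4) that(1) by auto
    ultimately show ?thesis by arith
  qed
  have I: "{Suc M - r..M} \<subseteq> S"
  proof
    fix x assume "x \<in> {Suc M - r..M}"
    then have "x = M - (M - x)" "M - x < r" using hs by auto
    then show "x \<in> S" using hs(5)[of "M - x"] by simp
  qed
  have finT: "finite T" unfolding T_def fB_def using fin by auto
  have le: "x \<le> M - 1" if "x \<in> T" for x
  proof -
    have "x \<in> S \<and> x < Suc M - r \<or> M - r \<le> x \<and> x \<le> M - 1 \<or> x = r" using that mem by blast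
    then show ?thesis using small[of x] hs by auto
  qed
  have "M - r \<le> M - 1" using hs by arith
  then have inT: "M - 1 \<in> T" unfolding mem by blast
  have MT: "Max T = M - 1" by (rule Max_eqI[OF finT le inT])
  have ge: "r \<le> x" if "x \<in> T" for x
  proof -
    have "x \<in> S \<and> x < Suc M - r \<or> M - r \<le> x \<and> x \<le> M - 1 \<or> x = r" using that mem by blast
    then show ?thesis using B(3)[of x] hs by (auto simp: r_def)
  qed
  have rT: "r \<in> T" unfolding mem by blast
  have mT: "Min T = r" by (rule Min_eqI[OF finT ge rT])
  show "pset T" proof
    show "finite T" by (rule finT)
    show "T \<noteq> {}" using rT by auto
    show "0 \<notin> T" using ge hs by force
  qed
  then interpret T: pset T .
  show "Max T = Max S - 1" using MT by (simp add: M_def)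
  show "Min T = rn S" using mT by (simp add: r_def)
  have rnT: "r \<le> rn T"
  proof (rule ccontr)
    assume "\<not> r \<le> rn T"
    then have "M - r \<le> Max T - rn T" "Max T - rn T \<le> M - 1" using MT hs by auto
    then have "Max T - rn T \<in> T" unfolding mem by blast
    then show False using T.basics(8) by simp
  qed
  then show "Min T \<le> rn T" using mT by simp
  show "2 * Min T \<le> Max T" using mT MT hs by simp
  show "fA T = S"
  proof -
    have e1: "Suc (Max T) - Min T = M - r" using MT mT hs by simp
    have e2: "Suc (Suc (Max T)) - Min T = Suc M - r" using MT mT hs by simp
    have e3: "Suc (M - 1) = M" using hs by simp
    have "fA T = (T - {r} - {M - r..M - 1}) \<union> {Suc M - r..M}"
      unfolding fA_def mT MT using e3 MT by simp
    also have "\<dots> = S"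
    proof (rule set_eqI)
      fix x
      have "x \<in> S \<Longrightarrow> x \<noteq> r" using B(3)[of x] hs by (auto simp: r_def)
      then show "x \<in> (T - {r} - {M - r..M - 1}) \<union> {Suc M - r..M} \<longleftrightarrow> x \<in> S"
        using mem[of x] I small[of x] B(4)[of x] hs by (auto simp: M_def)
    qed
    finally show ?thesis .
  qed
  define R where "R = S - {Suc M - r..M}"
  have S_split: "S = R \<union> {Suc M - r..M}" using I by (auto simp: R_def)
  have T_split: "T = R \<union> ({M - r..M - 1} \<union> {r})"
    unfolding T_def fB_def R_def M_def r_def by auto
  have rJ: "r \<notin> {M - r..M - 1}" using hs by auto
  have RJ: "R \<inter> ({M - r..M - 1} \<union> {r}) = {}"
  proof -
    have "x \<in> R \<Longrightarrow> x < M - r" for x using small[of x] B(4)[of x] by (auto simp: R_def M_def)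
    moreover have "r \<notin> R" using hs B(3)[of r] by (auto simp: R_def r_def)
    ultimately show ?thesis by fastforce
  qed
  have sumS: "\<Sum>S = \<Sum>R + \<Sum>{Suc M - r..M}"
    by (subst S_split, subst sum.union_disjoint) (use fin in \<open>auto simp: R_def\<close>)
  have sumT: "\<Sum>T = \<Sum>R + (\<Sum>{M - r..M - 1} + r)"
    by (subst T_split, subst sum.union_disjoint) (use fin RJ rJ in \<open>auto simp: R_def\<close>)
  have "Suc M - r = Suc (M - r)" "M = Suc (M - 1)" using hs by arith+
  then have "\<Sum>{Suc M - r..M} = \<Sum>{Suc (M - r)..Suc (M - 1)}" by simp
  also have "\<dots> = \<Sum>{M - r..M - 1} + r" using sum_shift_Icc[of "M - r" "M - 1"] hs by simp
  finally show "\<Sum>T = \<Sum>S" using sumS sumT by simp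
qed




lemma sum_Icc_len: "2 * \<Sum>{u..u+m} = Suc m * (2*u + m)"
proof (induction m)
  case 0 then show ?case by simp
next
  case (Suc m)
  have "\<Sum>{u..u + Suc m} = \<Sum>{u..u+m} + (u + Suc m)" by simp
  then show ?case using Suc by (simp add: algebra_simps)
qed

lemma (in pset) exc:
  assumes "\<not> good S" shows "\<exists>m. 24 * \<Sum>S + 1 = m^2"
proof -
  note B = basics
  define M where "M = Max S"
  define s where "s = Min S"
  define r where "r = rn S"
  have B': "M \<in> S" "s \<in> S" "\<And>x. x \<in> S \<Longrightarrow> s \<le> x" "\<And>x. x \<in> S \<Longrightarrow> x \<le> M"
    "0 < s" "1 \<le> r" "r \<le> M" "M - r \<notin> S" "\<And>t. t < r \<Longrightarrow> M - t \<in> S"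
    using B by (auto simp: M_def s_def r_def)
  show ?thesis
  proof (cases "s \<le> r")
    case True
    then have h: "M < 2 * s" using assms by (auto simp: good_def M_def s_def r_def)
    have sM: "s \<le> M" using B' by auto
    have "M - (Suc M - s) \<notin> S"
    proof
      assume "M - (Suc M - s) \<in> S"
      then have "s \<le> M - (Suc M - s)" using B'(3) by blast
      then show False using sM B'(5) by arith
    qed
    then have "r \<le> Suc M - s" unfolding r_def rn_def M_def by (rule Least_le)
    then have Meq: "M = s + (s - 1)" using True h sM by arith
    have "S = {s..s + (s - 1)}"
    proof
      show "S \<subseteq> {s..s + (s - 1)}" using B'(3,4) Meq by auto
      show "{s..s + (s - 1)} \<subseteq> S"
      proof
        fix x assume x: "x \<in> {s..s + (s - 1)}"
        then have "s \<le> x" "x \<le> s + (s - 1)" by auto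
        then have "x = M - (M - x)" "M - x < r" using Meq True B'(5) by arith+
        then show "x \<in> S" using B'(9)[of "M - x"] by simp
      qed
    qed
    then have e: "2 * \<Sum>S = s * (3 * s - 1)" using sum_Icc_len[of s "s - 1"] B'(5)
      by (simp add: algebra_simps)
    obtain j where j: "s = Suc j" using B'(5) gr0_implies_Suc by blast
    have "2 * \<Sum>S = (j + 1) * (3 * j + 2)" using e j by simp
    then have "24 * \<Sum>S + 1 = 12 * ((j + 1) * (3 * j + 2)) + 1" by simp
    also have "\<dots> = (6 * j + 5)^2" by (simp add: power2_eq_square algebra_simps)
    finally have "24 * \<Sum>S + 1 = (6 * j + 5)^2" .
    then show ?thesis by blast
  next
    case False
    then have h: "M \<le> 2 * r" "r < s" using assms by (auto simp: good_def M_def s_def r_def)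
    have "M - (r - 1) \<in> S" using B'(9)[of "r - 1"] B'(6) by simp
    then have "s \<le> M - (r - 1)" using B'(3) by blast
    then have Meq: "M = 2 * r" using h B'(6,7) by arith
    have "S = {Suc r..Suc r + (r - 1)}"
    proof
      show "S \<subseteq> {Suc r..Suc r + (r - 1)}" using B'(3,4) Meq h B'(6) by fastforce
      show "{Suc r..Suc r + (r - 1)} \<subseteq> S"
      proof
        fix x assume x: "x \<in> {Suc r..Suc r + (r - 1)}"
        then have "Suc r \<le> x" "x \<le> Suc r + (r - 1)" by auto
        then have "x = M - (M - x)" "M - x < r" using Meq B'(6) by arith+
        then show "x \<in> S" using B'(9)[of "M - x"] by simp
      qed
    qed
    then have e: "2 * \<Sum>S = r * (2 * Suc r + (r - 1))" using sum_Icc_len[of "Suc r" "r - 1"] B'(6)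
      by simp
    obtain j where j: "r = Suc j" using B'(6) by (metis Suc_le_D One_nat_def)
    have "2 * \<Sum>S = (j + 1) * (3 * j + 4)" using e j by (simp add: algebra_simps)
    then have "24 * \<Sum>S + 1 = 12 * ((j + 1) * (3 * j + 4)) + 1" by simp
    also have "\<dots> = (6 * j + 7)^2" by (simp add: power2_eq_square algebra_simps)
    finally have "24 * \<Sum>S + 1 = (6 * j + 7)^2" .
    then show ?thesis by blast
  qed
qed

lemma DS_even:
  assumes nsq: "\<not> (\<exists>m. 24 * n + 1 = m^2)"
  shows "even (card (DS n))"
proof (rule even_card_involution[where f = fr])
  fix S assume S: "S \<in> DS n"
  have SS: "finite S" "0 \<notin> S" "\<Sum>S = n" using S by (auto simp: DS_def)
  have ne: "S \<noteq> {}"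
  proof
    assume "S = {}"
    then have "n = 0" using SS by simp
    then show False using nsq by (metis mult_0_right add_0 power_one)
  qed
  interpret pset S using SS ne by unfold_locales
  have g: "good S" using exc nsq SS(3) by blast
  have "fr S \<in> DS n \<and> fr (fr S) = S \<and> fr S \<noteq> S"
  proof (cases "Min S \<le> rn S")
    case True
    then have h: "2 * Min S \<le> Max S" using g by (auto simp: good_def)
    note A = A_props[OF True h]
    have frS: "fr S = fA S" using True by (simp add: fr_def)
    interpret T: pset "fA S" by (rule A(1))
    have "fr (fA S) = fB (fA S)" using A(5) by (simp add: fr_def)
    moreover have "fA S \<noteq> S" using A(3) by (metis Suc_n_not_n)
    ultimately show ?thesis using frS A(2,7) SS T.fin T.nz by (simp add: DS_def)
  next
    case False
    then have h: "rn S < Min S" "2 * rn S < Max S" using g by (auto simp: good_def)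
    note Bp = B_props[OF h]
    have frS: "fr S = fB S" using False by (simp add: fr_def)
    interpret T: pset "fB S" by (rule Bp(1))
    have "fr (fB S) = fA (fB S)" using Bp(5) by (simp add: fr_def)
    moreover have "fB S \<noteq> S" using Bp(3) h by (metis diff_less less_nat_zero_code not_less_zero
      zero_less_one less_irrefl neq0_conv le0 order.strict_trans1)
    ultimately show ?thesis using frS Bp(2,7) SS T.fin T.nz by (simp add: DS_def)
  qed
  then show "fr S \<in> DS n" "fr (fr S) = S" "fr S \<noteq> S" by auto
qed

lemma b2_even: "\<not> (\<exists>m. 24 * n + 1 = m^2) \<Longrightarrow> even (b 2 n)"
  using DS_even b2_eq_DS by simp




lemma sq_mod24:
  fixes p :: nat assumes "prime p" "p \<ge> 5" shows "p^2 mod 24 = 1"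
proof -
  have n2: "\<not> 2 dvd p"
  proof
    assume d: "2 dvd p"
    have "\<forall>m. m dvd p \<longrightarrow> m = 1 \<or> m = p" using prime_nat_iff[THEN iffD1, OF assms(1)] by blast
    then have "(2::nat) = 1 \<or> 2 = p" using d by blast
    then have "p = 2" by simp
    then show False using assms by simp
  qed
  have n3: "\<not> 3 dvd p"
  proof
    assume d: "3 dvd p"
    have "\<forall>m. m dvd p \<longrightarrow> m = 1 \<or> m = p" using prime_nat_iff[THEN iffD1, OF assms(1)] by blast
    then have "(3::nat) = 1 \<or> 3 = p" using d by blast
    then have "p = 3" by simp
    then show False using assms by simp
  qed
  define r where "r = p mod 24"
  have r24: "r < 24" by (simp add: r_def)
  have "p mod 2 = r mod 2" unfolding r_def by (simp add: mod_mod_cancel)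
  then have r2: "\<not> 2 dvd r" using n2 by (simp add: dvd_eq_mod_eq_0)
  have "p mod 3 = r mod 3" unfolding r_def by (simp add: mod_mod_cancel)
  then have r3: "\<not> 3 dvd r" using n3 by (simp add: dvd_eq_mod_eq_0)
  have "p^2 mod 24 = r^2 mod 24" unfolding r_def by (simp add: power_mod)
  moreover have "r^2 mod 24 = 1"
  proof -
    have all: "\<forall>x\<in>set [0..<24]. \<not> 2 dvd x \<longrightarrow> \<not> 3 dvd x \<longrightarrow> x^2 mod 24 = (1::nat)"
      by code_simp
    have "r \<in> set [0..<24]" using r24 by simp
    then show ?thesis using all r2 r3 by blast
  qed
  ultimately show ?thesis by simp
qed

lemma prod_sq: "(\<Prod>p\<leftarrow>qs. (p::nat)^2) = (prod_list qs)^2"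
  by (induction qs) (auto simp: power_mult_distrib)

lemma prod_sq_mod24:
  assumes "\<forall>p\<in>set qs. prime p \<and> p \<ge> 5"
  shows "(prod_list qs)^2 mod 24 = (1::nat)"
  using assms
proof (induction qs)
  case (Cons a qs)
  have "(prod_list (a # qs))^2 = a^2 * (prod_list qs)^2" by (simp add: power_mult_distrib)
  then show ?case using Cons sq_mod24[of a] by (simp add: mod_mult_eq[symmetric])
qed simp

theorem theorem3p6:
  fixes ps :: "nat list" and n i :: nat
  assumes "length ps \<ge> 1"
    and "\<forall>p \<in> set ps. prime p \<and> p \<ge> 5"
    and "1 \<le> i" and "i \<le> last ps - 1"
  shows "even (b 2 ((\<Prod>p\<leftarrow>ps. p^2) * n
          + ((24 * i + last ps) * (\<Prod>p\<leftarrow>butlast ps. p^2) * last ps - 1) div 24))"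
proof (rule b2_even)
  define p where "p = last ps"
  define qs where "qs = butlast ps"
  define R where "R = prod_list qs"
  have "ps \<noteq> []" using assms(1) by auto
  then have ps: "ps = qs @ [p]" by (simp add: p_def qs_def)
  have pp: "prime p" "p \<ge> 5" using assms(2) ps by auto
  have qsp: "\<forall>q\<in>set qs. prime q \<and> q \<ge> 5" using assms(2) ps by auto
  have R24: "R^2 mod 24 = 1" using prod_sq_mod24[OF qsp] by (simp add: R_def)
  have R0: "R \<noteq> 0" using R24 by (metis mod_0 power_zero_numeral zero_neq_one)
  have P: "(\<Prod>p\<leftarrow>ps. p^2) = R^2 * p^2" using ps by (simp add: prod_sq R_def)
  have Q: "(\<Prod>p\<leftarrow>butlast ps. p^2) = R^2" by (simp add: prod_sq R_def qs_def)
  have i: "1 \<le> i" "i < p" using assms(3,4) pp by (auto simp: p_def)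
  define K where "K = (24 * i + p) * R^2 * p"
  have K: "K = 24 * (i * R^2 * p) + R^2 * p^2" by (simp add: K_def algebra_simps power2_eq_square)
  have "(R^2 * p^2) mod 24 = 1" using R24 sq_mod24[OF pp] by (simp add: mod_mult_eq[symmetric])
  then have Km: "K mod 24 = 1" using K by simp
  have K1: "K \<ge> 1" using Km by (cases K) auto
  define q where "q = K div 24"
  have Kq: "K = 24 * q + 1" using div_mult_mod_eq[of K 24] Km by (simp add: q_def)
  have Kd: "24 * ((K - 1) div 24) = K - 1" using Kq by simp
  define Y where "Y = 24 * p * n + 24 * i + p"
  show "\<not> (\<exists>m. 24 * ((\<Prod>p\<leftarrow>ps. p^2) * n
          + ((24 * i + last ps) * (\<Prod>p\<leftarrow>butlast ps. p^2) * last ps - 1) div 24) + 1 = m^2)"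
    unfolding P Q p_def[symmetric] K_def[symmetric]
  proof
    assume "\<exists>m. 24 * (R\<^sup>2 * p\<^sup>2 * n + (K - 1) div 24) + 1 = m\<^sup>2"
    then obtain m where m: "24 * (R\<^sup>2 * p\<^sup>2 * n + (K - 1) div 24) + 1 = m\<^sup>2" by blast
    have "24 * (R\<^sup>2 * p\<^sup>2 * n + (K - 1) div 24) + 1 = 24 * R^2 * p^2 * n + K"
      using Kd K1 by (simp add: algebra_simps)
    also have "\<dots> = R^2 * (p * Y)" by (simp add: K_def Y_def algebra_simps power2_eq_square)
    finally have eq: "R^2 * (p * Y) = m^2" using m by simp
    then have "R^2 dvd m^2" by (metis dvd_triv_left)
    then have "R dvd m" by simp
    then obtain m' where m': "m = R * m'" by (elim dvdE)
    have "R^2 * (p * Y) = R^2 * m'^2" using eq m' by (simp add: power_mult_distrib)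
    then have pY: "p * Y = m'^2" using R0 by simp
    then have "p dvd m'^2" by (metis dvd_triv_left)
    then have "p dvd m'" by (rule prime_dvd_power[OF pp(1)])
    then have "p^2 dvd m'^2" by simp
    then have "p * p dvd p * Y" using pY by (simp add: power2_eq_square)
    then have "p dvd Y" using pp by (simp add: prime_gt_0_nat)
    moreover have "Y = p * (24 * n + 1) + 24 * i" by (simp add: Y_def algebra_simps)
    ultimately have "p dvd 24 * i" by (simp add: dvd_add_right_iff)
    then have "p dvd 24 \<or> p dvd i" using pp(1) by (simp add: prime_dvd_mult_iff)
    moreover have "\<not> p dvd i" using i by (auto dest: dvd_imp_le)
    moreover have "\<not> p dvd 24"
    proof
      assume "p dvd 24"
      then have "p dvd 2^3 * 3" by simp
      then have "p dvd 2^3 \<or> p dvd 3" using pp(1) by (simp add: prime_dvd_mult_iff del: power_numeral)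
      moreover have "p dvd 2" if "p dvd 2^3" by (rule prime_dvd_power[OF pp(1) that])
      ultimately have "p dvd 2 \<or> p dvd 3" by blast
      then have "p \<le> 3" by (auto dest: dvd_imp_le)
      then show False using pp by simp
    qed
    ultimately show False by blast
  qed
qed


end
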